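(* Let $N\ge 2$, $n\ge 1$, and let $\mathbf{P}_1,\dots,\mathbf{P}_N\in\mathbb{R}^n$ satisfy $\sum_{i=1}^N\mathbf{P}_i=0$. Let $(Y_1,\dots,Y_N)\in[0,\infty)^N$ with not all $Y_i$ equal to zero. Consider the system for unknowns $\mathbf{V}_1,\dots,\mathbf{V}_N\in\mathbb{R}^n$: $$\sum_{i=1}^N Y_i\mathbf{V}_i=0,\qquad \sum_{j=1}^N B_{ij}(\mathbf{Y})\mathbf{V}_j=\mathbf{P}_i\quad(1\le i\le N),\tag{S1}$$ and the system for unknowns $\mathbf{F}_1,\dots,\mathbf{F}_N\in\mathbb{R}^n$: $$\sum_{i=1}^N\mathbf{F}_i=0,\qquad \Big(\sum_{k\ne i}d'_{ik}Y_k\Big)\mathbf{F}_i-Y_i\sum_{j\ne i}d'_{ij}\mathbf{F}_j=\mathbf{P}_i\quad(1\le i\le N).\tag{S2}$$ Then: (i) If $Y_i>0$ for all $i$, the system (S1) (which consists of $N+1$ vector equations) is consistent and determines $\mathbf{V}_1,\dots,\mathbf{V}_N$ uniquely, and (S2) determines $\mathbf{F}_i=Y_i\mathbf{V}_i$ uniquely. Moreover $\mathbf{V}=(\mathbf{V}_1,\dots,\mathbf{V}_N)$ is the unique solution of $\sum_{j}C_{ij}(\mathbf{Y})\mathbf{V}_j=\mathbf{P}_i$, $1\le i\le N$, where $C(\mathbf{Y})$ is symmetric positive definite. (ii) If, after relabeling, $Y_1,\dots,Y_k>0$ and $Y_{k+1}=\dots=Y_N=0$ for some $1\le k<N$, then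 in (S1) the vectors $\mathbf{V}_1,\dots,\mathbf{V}_k$ are uniquely determined while $\mathbf{V}_{k+1},\dots,\mathbf{V}_N$ are undetermined (when solutions exist); nevertheless all $\mathbf{F}_i$ are uniquely determined by (S2): for $i=k+1,\dots,N$, $\mathbf{F}_i=\mathbf{P}_i/S_i$ with $S_i=\sum_{j=1}^k d'_{ij}Y_j$, and $\mathbf{F}_1,\dots,\mathbf{F}_k$ are the unique solution of the $k\times k$ (vector) system $$\Big(\sum_{j\le k, j\ne i}d'_{ij}Y_j+\gamma Y_i\Big)\mathbf{F}_i-Y_i\sum_{j\le k,j\ne i}(d'_{ij}-\gamma)\mathbf{F}_j=\mathbf{P}_i+Y_i\sum_{j=k+1}^N(d'_{ij}-\gamma)\mathbf{F}_j,\quad 1\le i\le k.$$ In particular $\mathbf{F}_{k+1}=\dots=\mathbf{F}_N=0$ if $\mathbf{P}_{k+1}=\dots=\mathbf{P}_N=0$. (iii) In all cases, the linear system $$\Big(\sum_{j\ne i}d'_{ij}Y_j+\gamma Y_i\Big)\mathbf{F}_i-Y_i\sum_{j\ne i}(d'_{ij}-\gamma)\mathbf{F}_j=\mathbf{P}_i,\quad 1\le i\le N,\tag{S3}$$ has an invertible matrix (for every $\mathbf{P}\in\mathbb{R}^{Nn}$, whether or not $\sum_i\mathbf{P}_i=0$); its solution satisfies $\gamma(\sum_iY_i)(\sum_j\mathbf{F}_j)=\sum_j\mathbf{P}_j$, and when $\sum_i\mathbf{P}_i=0$ the system (S3) is equivalent to (S2), so the $\mathbf{F}_i$ are uniquely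 determined as the solution of (S3).
   Context: Fix molecular masses $M_1,\dots,M_N>0$ and symmetric constants $d_{ij}=d_{ji}>0$ for $i\ne j$ (inverse binary diffusion coefficients). Set $d'_{ij}=d_{ij}/(M_iM_j)$ for $i\neq j$ and $\gamma=\min_{i\ne j}d'_{ij}>0$. For $\mathbf{Y}=(Y_1,\dots,Y_N)$, the $N\times N$ matrix $B(\mathbf{Y})$ is defined by $B_{ij}(\mathbf{Y})=-d'_{ij}Y_iY_j$ for $j\ne i$ and $B_{ii}(\mathbf{Y})=\sum_{k\ne i}d'_{ik}Y_iY_k$, and $C(\mathbf{Y})$ is defined by $C_{ij}(\mathbf{Y})=B_{ij}(\mathbf{Y})+\gamma Y_iY_j$. Matrices act componentwise on $N$-tuples of vectors of $\mathbb{R}^n$. Sums $\sum_{j\ne i}$ range over $j\in\{1,\dots,N\}\setminus\{i\}$ unless otherwise indicated. *)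

theory Defs
  imports "HOL-Analysis.Analysis"
begin

text \<open>Species are indexed by 1..N (natural numbers); only values on this
range matter. M: molecular masses, d: inverse binary diffusion coefficients.\<close>

definition dp :: "(nat \<Rightarrow> real) \<Rightarrow> (nat \<Rightarrow> nat \<Rightarrow> real) \<Rightarrow> nat \<Rightarrow> nat \<Rightarrow> real" where
  "dp M d i j = d i j / (M i * M j)"

definition gam :: "nat \<Rightarrow> (nat \<Rightarrow> real) \<Rightarrow> (nat \<Rightarrow> nat \<Rightarrow> real) \<Rightarrow> real" where
  "gam N M d = Min {dp M d i j | i j. i \<in> {1..N} \<and> j \<in> {1..N} \<and> i \<noteq> j}"

definition Bm :: "nat \<Rightarrow> (nat \<Rightarrow> real) \<Rightarrow> (nat \<Rightarrow> nat \<Rightarrow> real) \<Rightarrow> (nat \<Rightarrow> real) \<Rightarrow> nat \<Rightarrow> nat \<Rightarrow> real" where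
  "Bm N M d Y i j = (if i = j then (\<Sum>k\<in>{1..N}-{i}. dp M d i k * Y i * Y k)
                     else - dp M d i j * Y i * Y j)"

definition Cm :: "nat \<Rightarrow> (nat \<Rightarrow> real) \<Rightarrow> (nat \<Rightarrow> nat \<Rightarrow> real) \<Rightarrow> (nat \<Rightarrow> real) \<Rightarrow> nat \<Rightarrow> nat \<Rightarrow> real" where
  "Cm N M d Y i j = Bm N M d Y i j + gam N M d * Y i * Y j"

definition S1 :: "nat \<Rightarrow> (nat \<Rightarrow> real) \<Rightarrow> (nat \<Rightarrow> nat \<Rightarrow> real) \<Rightarrow> (nat \<Rightarrow> real)
    \<Rightarrow> (nat \<Rightarrow> 'v::real_vector) \<Rightarrow> (nat \<Rightarrow> 'v) \<Rightarrow> bool" where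
  "S1 N M d Y P V \<longleftrightarrow> (\<Sum>i\<in>{1..N}. Y i *\<^sub>R V i) = 0 \<and>
      (\<forall>i\<in>{1..N}. (\<Sum>j\<in>{1..N}. Bm N M d Y i j *\<^sub>R V j) = P i)"

definition S2 :: "nat \<Rightarrow> (nat \<Rightarrow> real) \<Rightarrow> (nat \<Rightarrow> nat \<Rightarrow> real) \<Rightarrow> (nat \<Rightarrow> real)
    \<Rightarrow> (nat \<Rightarrow> 'v::real_vector) \<Rightarrow> (nat \<Rightarrow> 'v) \<Rightarrow> bool" where
  "S2 N M d Y P F \<longleftrightarrow> (\<Sum>i\<in>{1..N}. F i) = 0 \<and>
      (\<forall>i\<in>{1..N}. (\<Sum>k\<in>{1..N}-{i}. dp M d i k * Y k) *\<^sub>R F i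
                    - Y i *\<^sub>R (\<Sum>j\<in>{1..N}-{i}. dp M d i j *\<^sub>R F j) = P i)"

definition S3 :: "nat \<Rightarrow> (nat \<Rightarrow> real) \<Rightarrow> (nat \<Rightarrow> nat \<Rightarrow> real) \<Rightarrow> (nat \<Rightarrow> real)
    \<Rightarrow> (nat \<Rightarrow> 'v::real_vector) \<Rightarrow> (nat \<Rightarrow> 'v) \<Rightarrow> bool" where
  "S3 N M d Y P F \<longleftrightarrow>
      (\<forall>i\<in>{1..N}. ((\<Sum>j\<in>{1..N}-{i}. dp M d i j * Y j) + gam N M d * Y i) *\<^sub>R F i
                    - Y i *\<^sub>R (\<Sum>j\<in>{1..N}-{i}. (dp M d i j - gam N M d) *\<^sub>R F j) = P i)"

definition Csys :: "nat \<Rightarrow> (nat \<Rightarrow> real) \<Rightarrow> (nat \<Rightarrow> nat \<Rightarrow> real) \<Rightarrow> (nat \<Rightarrow> real)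
    \<Rightarrow> (nat \<Rightarrow> 'v::real_vector) \<Rightarrow> (nat \<Rightarrow> 'v) \<Rightarrow> bool" where
  "Csys N M d Y P V \<longleftrightarrow> (\<forall>i\<in>{1..N}. (\<Sum>j\<in>{1..N}. Cm N M d Y i j *\<^sub>R V j) = P i)"

text \<open>The reduced k x k system of part (ii); F supplies the values F_{k+1..N}
  on the right-hand side, G is the unknown (G_1..G_k).\<close>
definition Ksys :: "nat \<Rightarrow> nat \<Rightarrow> (nat \<Rightarrow> real) \<Rightarrow> (nat \<Rightarrow> nat \<Rightarrow> real) \<Rightarrow> (nat \<Rightarrow> real)
    \<Rightarrow> (nat \<Rightarrow> 'v::real_vector) \<Rightarrow> (nat \<Rightarrow> 'v) \<Rightarrow> (nat \<Rightarrow> 'v) \<Rightarrow> bool" where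
  "Ksys N k M d Y P F G \<longleftrightarrow>
      (\<forall>i\<in>{1..k}. ((\<Sum>j\<in>{1..k}-{i}. dp M d i j * Y j) + gam N M d * Y i) *\<^sub>R G i
                    - Y i *\<^sub>R (\<Sum>j\<in>{1..k}-{i}. (dp M d i j - gam N M d) *\<^sub>R G j)
                  = P i + Y i *\<^sub>R (\<Sum>j\<in>{k+1..N}. (dp M d i j - gam N M d) *\<^sub>R F j))"

definition uniq_sol :: "nat set \<Rightarrow> ((nat \<Rightarrow> 'v) \<Rightarrow> bool) \<Rightarrow> bool" where
  "uniq_sol I Q \<longleftrightarrow> (\<exists>x. Q x) \<and> (\<forall>x y. Q x \<longrightarrow> Q y \<longrightarrow> (\<forall>i\<in>I. x i = y i))"

definition sym_posdef :: "nat \<Rightarrow> (nat \<Rightarrow> nat \<Rightarrow> real) \<Rightarrow> bool" where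
  "sym_posdef N A \<longleftrightarrow> (\<forall>i\<in>{1..N}. \<forall>j\<in>{1..N}. A i j = A j i) \<and>
     (\<forall>x :: nat \<Rightarrow> real. (\<exists>i\<in>{1..N}. x i \<noteq> 0) \<longrightarrow>
        0 < (\<Sum>i\<in>{1..N}. \<Sum>j\<in>{1..N}. x i * A i j * x j))"

end

theory Submission
  imports Defs "Jordan_Normal_Form.Determinant"
begin



definition s3l :: "nat set \<Rightarrow> (nat\<Rightarrow>nat\<Rightarrow>real) \<Rightarrow> real \<Rightarrow> (nat\<Rightarrow>real) \<Rightarrow> (nat\<Rightarrow>'v::real_vector) \<Rightarrow> nat \<Rightarrow> 'v" where
 "s3l I D g Y F i = ((\<Sum>j\<in>I-{i}. D i j * Y j) + g * Y i) *\<^sub>R F i - Y i *\<^sub>R (\<Sum>j\<in>I-{i}. (D i j - g) *\<^sub>R F j)"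

definition s2l :: "nat set \<Rightarrow> (nat\<Rightarrow>nat\<Rightarrow>real) \<Rightarrow> (nat\<Rightarrow>real) \<Rightarrow> (nat\<Rightarrow>'v::real_vector) \<Rightarrow> nat \<Rightarrow> 'v" where
 "s2l I D Y F i = (\<Sum>k\<in>I-{i}. D i k * Y k) *\<^sub>R F i - Y i *\<^sub>R (\<Sum>j\<in>I-{i}. D i j *\<^sub>R F j)"

definition coefA :: "nat set \<Rightarrow> (nat\<Rightarrow>nat\<Rightarrow>real) \<Rightarrow> real \<Rightarrow> (nat\<Rightarrow>real) \<Rightarrow> nat \<Rightarrow> nat \<Rightarrow> real" where
 "coefA I D g Y i j = (if i = j then (\<Sum>k\<in>I-{i}. D i k * Y k) + g * Y i else - (Y i * (D i j - g)))"

lemma sum_swap_off: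
  fixes f :: "nat \<Rightarrow> nat \<Rightarrow> 'a::comm_monoid_add"
  assumes "finite I"
  shows "(\<Sum>i\<in>I. \<Sum>j\<in>I-{i}. f i j) = (\<Sum>i\<in>I. \<Sum>j\<in>I-{i}. f j i)"
proof -
  have e: "(\<Sum>j\<in>I-{i}. h j) = (\<Sum>j\<in>I. if j = i then 0 else h j)" for i and h :: "nat \<Rightarrow> 'a"
    using assms by (simp add: sum.If_cases Diff_eq Compl_eq)
  have "(\<Sum>i\<in>I. \<Sum>j\<in>I-{i}. f i j) = (\<Sum>i\<in>I. \<Sum>j\<in>I. if j = i then 0 else f i j)"
    by (simp add: e)
  also have "\<dots> = (\<Sum>j\<in>I. \<Sum>i\<in>I. if j = i then 0 else f i j)" by (rule sum.swap)
  also have "\<dots> = (\<Sum>j\<in>I. \<Sum>i\<in>I. if i = j then 0 else f i j)"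
    by (intro sum.cong refl) auto
  also have "\<dots> = (\<Sum>j\<in>I. \<Sum>i\<in>I-{j}. f i j)"
    by (simp only: e)
  finally show ?thesis .
qed

lemma E5:
  assumes "finite I" "i \<in> I"
  shows "s3l I D g Y F i = (\<Sum>j\<in>I. coefA I D g Y i j *\<^sub>R F j)"
proof -
  have "(\<Sum>j\<in>I. coefA I D g Y i j *\<^sub>R F j) = coefA I D g Y i i *\<^sub>R F i + (\<Sum>j\<in>I-{i}. coefA I D g Y i j *\<^sub>R F j)"
    using assms by (simp add: sum.remove)
  also have "(\<Sum>j\<in>I-{i}. coefA I D g Y i j *\<^sub>R F j) = - (Y i *\<^sub>R (\<Sum>j\<in>I-{i}. (D i j - g) *\<^sub>R F j))"
    by (simp add: coefA_def scaleR_sum_right sum_negf[symmetric])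
  finally show ?thesis by (simp add: s3l_def coefA_def)
qed

lemma E1:
  assumes "finite I" "i \<in> I"
  shows "s3l I D g Y F i = s2l I D Y F i + (g * Y i) *\<^sub>R (\<Sum>j\<in>I. F j)"
proof -
  have s: "(\<Sum>j\<in>I. F j) = F i + (\<Sum>j\<in>I-{i}. F j)" using assms by (simp add: sum.remove)
  have h: "(\<Sum>j\<in>I-{i}. (D i j - g) *\<^sub>R F j) = (\<Sum>j\<in>I-{i}. D i j *\<^sub>R F j) - g *\<^sub>R (\<Sum>j\<in>I-{i}. F j)"
    by (simp add: scaleR_left_diff_distrib sum_subtractf scaleR_sum_right)
  show ?thesis unfolding s3l_def s2l_def s h
    by (simp add: algebra_simps)
qed

lemma E4:
  assumes "finite I" and sym: "\<forall>i\<in>I. \<forall>j\<in>I. D i j = D j i"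
  shows "(\<Sum>i\<in>I. s2l I D Y F i) = (0::'v::real_vector)"
proof -
  have a: "(\<Sum>i\<in>I. Y i *\<^sub>R (\<Sum>j\<in>I-{i}. D i j *\<^sub>R F j)) = (\<Sum>i\<in>I. \<Sum>j\<in>I-{i}. (Y i * D i j) *\<^sub>R F j)"
    by (simp add: scaleR_sum_right)
  also have "\<dots> = (\<Sum>i\<in>I. \<Sum>j\<in>I-{i}. (Y j * D j i) *\<^sub>R F i)"
    by (rule sum_swap_off[OF assms(1)])
  also have "\<dots> = (\<Sum>i\<in>I. \<Sum>j\<in>I-{i}. (D i j * Y j) *\<^sub>R F i)"
    using sym by (intro sum.cong refl) (auto simp: mult.commute)
  also have "\<dots> = (\<Sum>i\<in>I. (\<Sum>k\<in>I-{i}. D i k * Y k) *\<^sub>R F i)"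
    by (simp add: scaleR_sum_left)
  finally show ?thesis unfolding s2l_def by (simp add: sum_subtractf)
qed

lemma E3sum:
  assumes "finite I" "\<forall>i\<in>I. \<forall>j\<in>I. D i j = D j i"
  shows "(\<Sum>i\<in>I. s3l I D g Y F i) = (g * (\<Sum>i\<in>I. Y i)) *\<^sub>R (\<Sum>j\<in>I. F j)"
proof -
  have "(\<Sum>i\<in>I. s3l I D g Y F i) = (\<Sum>i\<in>I. s2l I D Y F i + (g * Y i) *\<^sub>R (\<Sum>j\<in>I. F j))"
    using assms(1) by (intro sum.cong refl) (simp add: E1)
  also have "\<dots> = (\<Sum>i\<in>I. (g * Y i) *\<^sub>R (\<Sum>j\<in>I. F j))"
    by (simp add: sum.distrib E4[OF assms])
  also have "\<dots> = (g * (\<Sum>i\<in>I. Y i)) *\<^sub>R (\<Sum>j\<in>I. F j)"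
    by (simp add: scaleR_sum_left sum_distrib_left)
  finally show ?thesis .
qed

lemma s3l_diff:
  "s3l I D g Y (\<lambda>j. F j - G j) i = s3l I D g Y F i - s3l I D g Y G i"
proof -
  have h: "(\<Sum>j\<in>I-{i}. (D i j - g) *\<^sub>R (F j - G j)) = (\<Sum>j\<in>I-{i}. (D i j - g) *\<^sub>R F j) - (\<Sum>j\<in>I-{i}. (D i j - g) *\<^sub>R G j)"
    by (simp only: scaleR_diff_right sum_subtractf)
  show ?thesis unfolding s3l_def h by (simp add: algebra_simps)
qed

lemma s3l_comp:
  fixes F :: "nat \<Rightarrow> real^'n"
  shows "s3l I D g Y F i $ c = s3l I D g Y (\<lambda>j. F j $ c) i"
  by (simp only: s3l_def vector_minus_component vector_scaleR_component sum_component real_scaleR_def)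

lemma s2l_cong:
  assumes "\<forall>j\<in>I. F j = G j" "i \<in> I"
  shows "s2l I D Y F i = s2l I D Y G i"
proof -
  have "(\<Sum>j\<in>I-{i}. D i j *\<^sub>R F j) = (\<Sum>j\<in>I-{i}. D i j *\<^sub>R G j)"
    using assms(1) by (intro sum.cong) auto
  then show ?thesis using assms unfolding s2l_def by simp
qed

lemma s3l_cong:
  assumes "\<forall>j\<in>I. F j = G j" "i \<in> I"
  shows "s3l I D g Y F i = s3l I D g Y G i"
proof -
  have "(\<Sum>j\<in>I-{i}. (D i j - g) *\<^sub>R F j) = (\<Sum>j\<in>I-{i}. (D i j - g) *\<^sub>R G j)"
    using assms(1) by (intro sum.cong) auto
  then show ?thesis using assms unfolding s3l_def by simp
qed




lemma solvable:
  fixes a :: "nat \<Rightarrow> nat \<Rightarrow> real" and b :: "nat \<Rightarrow> real"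
  assumes inj: "\<And>x. \<forall>i\<in>{1..N}. (\<Sum>j\<in>{1..N}. a i j * x j) = 0 \<Longrightarrow> \<forall>i\<in>{1..N}. x i = 0"
  shows "\<exists>x. \<forall>i\<in>{1..N}. (\<Sum>j\<in>{1..N}. a i j * x j) = b i"
proof -
  define A where "A = Matrix.mat N N (\<lambda>(i,j). a (Suc i) (Suc j))"
  have A: "A \<in> carrier_mat N N" by (simp add: A_def)
  have reidx: "(\<Sum>j\<in>{1..N}. g j) = (\<Sum>j<N. g (Suc j))" for g :: "nat \<Rightarrow> real"
    by (simp add: sum.atLeast1_atMost_eq)
  have mv: "(A *\<^sub>v v) $ i = (\<Sum>j\<in>{1..N}. a (Suc i) j * v $ (j - 1))"
    if "v \<in> carrier_vec N" "i < N" for v i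
    using that by (simp add: A_def scalar_prod_def sum.atLeast1_atMost_eq atLeast0LessThan)
  have "det A \<noteq> 0"
  proof
    assume "det A = 0"
    then obtain v where v: "v \<in> carrier_vec N" "v \<noteq> 0\<^sub>v N" "A *\<^sub>v v = 0\<^sub>v N"
      using det_0_iff_vec_prod_zero[OF A] by auto
    define x where "x j = v $ (j - 1)" for j
    have "\<forall>i\<in>{1..N}. (\<Sum>j\<in>{1..N}. a i j * x j) = 0"
    proof
      fix i assume i: "i \<in> {1..N}"
      then have il: "i - 1 < N" by auto
      then have "(A *\<^sub>v v) $ (i - 1) = 0" using v(3) by simp
      moreover have "Suc (i - 1) = i" using i by auto
      ultimately show "(\<Sum>j\<in>{1..N}. a i j * x j) = 0" using mv[OF v(1), of "i - 1"] i
        by (simp add: x_def)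
    qed
    from inj[OF this] have xz: "\<forall>i\<in>{1..N}. x i = 0" .
    have "\<forall>i<N. v $ i = 0"
    proof (intro allI impI)
      fix i assume "i < N"
      then have "Suc i \<in> {1..N}" by simp
      then have "x (Suc i) = 0" using xz by blast
      then show "v $ i = 0" by (simp add: x_def)
    qed
    then have "v = 0\<^sub>v N" using v(1) by (intro eq_vecI) auto
    with v(2) show False by simp
  qed
  then have "A \<in> Units (ring_mat TYPE(real) N ())" by (rule det_non_zero_imp_unit[OF A])
  then obtain B where B: "B \<in> carrier_mat N N" "A * B = 1\<^sub>m N"
    by (auto simp: Units_def ring_mat_def)
  define bv where "bv = vec N (\<lambda>i. b (Suc i))"
  define w where "w = B *\<^sub>v bv"
  have w: "w \<in> carrier_vec N" using B by (simp add: w_def bv_def)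
  have bv: "bv \<in> carrier_vec N" by (simp add: bv_def)
  have Aw: "A *\<^sub>v w = bv"
    unfolding w_def using assoc_mult_mat_vec[OF A B(1) bv] B(2) bv by simp
  show ?thesis
  proof (intro exI ballI)
    fix i assume i: "i \<in> {1..N}"
    then have il: "i - 1 < N" and si: "Suc (i - 1) = i" by auto
    have "(A *\<^sub>v w) $ (i - 1) = b i" using Aw il si by (simp add: bv_def)
    then show "(\<Sum>j\<in>{1..N}. a i j * (\<lambda>j. w $ (j - 1)) j) = b i"
      using mv[OF w il] si by simp
  qed
qed




lemma kernel_real:
  fixes x :: "nat \<Rightarrow> real"
  assumes fin: "finite I" and Ynn: "\<forall>i\<in>I. 0 \<le> Y i" and Ypos: "\<exists>i\<in>I. 0 < Y i"
    and Dsym: "\<forall>i\<in>I. \<forall>j\<in>I. D i j = D j i" and Dpos: "\<forall>i\<in>I. \<forall>j\<in>I. i \<noteq> j \<longrightarrow> 0 < D i j"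
    and g: "0 < g" and hom: "\<forall>i\<in>I. s3l I D g Y x i = 0"
  shows "\<forall>i\<in>I. x i = 0"
proof -
  have SY: "0 < sum Y I" using Ypos Ynn fin by (metis sum_pos2)
  have "(g * sum Y I) *\<^sub>R sum x I = (\<Sum>i\<in>I. s3l I D g Y x i)"
    using E3sum[OF fin Dsym, of g Y x] by simp
  also have "\<dots> = 0" using hom by simp
  finally have Sx: "sum x I = 0" using g SY by simp
  have e: "(\<Sum>j\<in>I-{i}. D i j * (Y j * x i - Y i * x j)) = 0" if i: "i \<in> I" for i
  proof -
    have "s2l I D Y x i = (\<Sum>j\<in>I-{i}. D i j * (Y j * x i - Y i * x j))"
      unfolding s2l_def by (simp add: sum_distrib_left sum_distrib_right sum_subtractf algebra_simps)
    moreover have "s3l I D g Y x i = s2l I D Y x i" using E1[OF fin i, of D g Y x] Sx by simp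
    ultimately show ?thesis using hom i by simp
  qed
  define J where "J = {i\<in>I. 0 < Y i}"
  define v where "v i = x i / Y i" for i
  have Jfin: "finite J" and Jne: "J \<noteq> {}" using fin Ypos by (auto simp: J_def)
  define mx where "mx = Max (v ` J)"
  have "mx \<in> v ` J" unfolding mx_def using Jfin Jne by (intro Max_in) auto
  then obtain m where m: "m \<in> J" "v m = mx" by auto
  have mge: "v j \<le> v m" if "j \<in> J" for j using that Jfin m(2) by (simp add: mx_def)
  have mI: "m \<in> I" and Ym: "0 < Y m" using m by (auto simp: J_def)
  have z: "x i = 0" if "i \<in> I" "Y i = 0" for i
  proof -
    have "(\<Sum>j\<in>I-{i}. D i j * (Y j * x i - Y i * x j)) = (\<Sum>j\<in>I-{i}. D i j * Y j) * x i"
      using that by (simp add: sum_distrib_right mult.assoc)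
    moreover have "0 < (\<Sum>j\<in>I-{i}. D i j * Y j)"
    proof (rule sum_pos2)
      show "finite (I - {i})" using fin by simp
      show "m \<in> I - {i}" using mI Ym that by auto
      have "i \<noteq> m" using that Ym by auto
      then show "0 < D i m * Y m" using Dpos mI that Ym by simp
      show "\<And>j. j \<in> I - {i} \<Longrightarrow> 0 \<le> D i j * Y j" using Dpos Ynn that
        by (metis DiffE insertI1 less_le mult_nonneg_nonneg)
    qed
    ultimately show ?thesis using e[OF that(1)] by simp
  qed
  have terms: "\<forall>j\<in>I-{m}. 0 \<le> D m j * (Y j * x m - Y m * x j)"
  proof
    fix j assume j: "j \<in> I - {m}"
    have Dmj: "0 < D m j" using Dpos mI j by auto
    show "0 \<le> D m j * (Y j * x m - Y m * x j)"
    proof (cases "Y j = 0")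
      case True then show ?thesis using z j by simp
    next
      case False
      then have jJ: "j \<in> J" and Yj: "0 < Y j" using j Ynn by (auto simp: J_def less_le)
      have "Y j * x m - Y m * x j = Y j * Y m * (v m - v j)"
        using Yj Ym by (simp add: v_def field_simps)
      moreover have "0 \<le> Y j * Y m * (v m - v j)" using mge[OF jJ] Yj Ym by simp
      ultimately show ?thesis using Dmj by simp
    qed
  qed
  have allz: "\<forall>j\<in>I-{m}. D m j * (Y j * x m - Y m * x j) = 0"
    using sum_nonneg_eq_0_iff[of "I-{m}" "\<lambda>j. D m j * (Y j * x m - Y m * x j)"] fin terms e[OF mI]
    by simp
  have xj: "x j = v m * Y j" if "j \<in> I" for j
  proof (cases "j = m")
    case True then show ?thesis using Ym by (simp add: v_def)
  next
    case False
    then have "D m j * (Y j * x m - Y m * x j) = 0" using that allz by auto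
    moreover have "0 < D m j" using Dpos mI that False by auto
    ultimately have "Y j * x m = Y m * x j" by simp
    then show ?thesis using Ym by (simp add: v_def field_simps)
  qed
  have "sum x I = v m * sum Y I" using xj by (simp add: sum_distrib_left)
  then have "v m = 0" using Sx SY by simp
  then show ?thesis using xj by simp
qed

lemma kernel_vec:
  fixes x :: "nat \<Rightarrow> real^'n"
  assumes fin: "finite I" and Ynn: "\<forall>i\<in>I. 0 \<le> Y i" and Ypos: "\<exists>i\<in>I. 0 < Y i"
    and Dsym: "\<forall>i\<in>I. \<forall>j\<in>I. D i j = D j i" and Dpos: "\<forall>i\<in>I. \<forall>j\<in>I. i \<noteq> j \<longrightarrow> 0 < D i j"
    and g: "0 < g" and hom: "\<forall>i\<in>I. s3l I D g Y x i = 0"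
  shows "\<forall>i\<in>I. x i = 0"
proof (intro ballI)
  fix i assume i: "i \<in> I"
  have "\<forall>i\<in>I. vec_nth (x i) c = 0" for c
  proof (rule kernel_real[OF fin Ynn Ypos Dsym Dpos g])
    show "\<forall>i\<in>I. s3l I D g Y (\<lambda>j. vec_nth (x j) c) i = 0"
      using hom by (simp add: s3l_comp[symmetric])
  qed
  then show "x i = 0" using i by (simp add: Finite_Cartesian_Product.vec_eq_iff)
qed

lemma exist_vec:
  fixes Q :: "nat \<Rightarrow> real^'n"
  assumes Ynn: "\<forall>i\<in>{1..N}. 0 \<le> Y i" and Ypos: "\<exists>i\<in>{1..N}. 0 < Y i"
    and Dsym: "\<forall>i\<in>{1..N}. \<forall>j\<in>{1..N}. D i j = D j i" and Dpos: "\<forall>i\<in>{1..N}. \<forall>j\<in>{1..N}. i \<noteq> j \<longrightarrow> 0 < D i j"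
    and g: "0 < g"
  shows "\<exists>F. \<forall>i\<in>{1..N}. s3l {1..N} D g Y F i = Q i"
proof -
  have "\<exists>x. \<forall>i\<in>{1..N}. (\<Sum>j\<in>{1..N}. coefA {1..N} D g Y i j * x j) = vec_nth (Q i) c" for c
  proof (rule solvable)
    fix x :: "nat \<Rightarrow> real"
    assume h: "\<forall>i\<in>{1..N}. (\<Sum>j\<in>{1..N}. coefA {1..N} D g Y i j * x j) = 0"
    show "\<forall>i\<in>{1..N}. x i = 0"
    proof (rule kernel_real[OF _ Ynn Ypos Dsym Dpos g])
      show "\<forall>i\<in>{1..N}. s3l {1..N} D g Y x i = 0" using h by (simp add: E5)
    qed simp
  qed
  then obtain X where X: "\<forall>c. \<forall>i\<in>{1..N}. (\<Sum>j\<in>{1..N}. coefA {1..N} D g Y i j * X c j) = vec_nth (Q i) c"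
    by metis
  define F where "F j = (\<chi> c. X c j)" for j
  show ?thesis
  proof (intro exI ballI)
    fix i assume i: "i \<in> {1..N}"
    have "vec_nth (s3l {1..N} D g Y F i) c = vec_nth (Q i) c" for c
      using X i by (simp add: s3l_comp F_def E5)
    then show "s3l {1..N} D g Y F i = Q i" by (simp add: Finite_Cartesian_Product.vec_eq_iff)
  qed
qed




lemma quad:
  fixes x :: "nat \<Rightarrow> real"
  assumes fin: "finite I" and sym: "\<forall>i\<in>I. \<forall>j\<in>I. T i j = T j i"
  shows "2 * (\<Sum>i\<in>I. x i * (\<Sum>j\<in>I-{i}. T i j * (x i - x j))) = (\<Sum>i\<in>I. \<Sum>j\<in>I-{i}. T i j * (x i - x j)^2)"
proof -
  have L: "(\<Sum>i\<in>I. x i * (\<Sum>j\<in>I-{i}. T i j * (x i - x j))) = (\<Sum>i\<in>I. \<Sum>j\<in>I-{i}. T i j * (x i * (x i - x j)))"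
    by (simp add: sum_distrib_left mult_ac)
  also have "\<dots> = (\<Sum>i\<in>I. \<Sum>j\<in>I-{i}. T j i * (x j * (x j - x i)))"
    by (rule sum_swap_off[OF fin])
  also have "\<dots> = (\<Sum>i\<in>I. \<Sum>j\<in>I-{i}. T i j * (x j * (x j - x i)))"
    using sym by (intro sum.cong refl) auto
  finally have L2: "(\<Sum>i\<in>I. x i * (\<Sum>j\<in>I-{i}. T i j * (x i - x j))) = (\<Sum>i\<in>I. \<Sum>j\<in>I-{i}. T i j * (x j * (x j - x i)))" .
  have "2 * (\<Sum>i\<in>I. x i * (\<Sum>j\<in>I-{i}. T i j * (x i - x j))) =
      (\<Sum>i\<in>I. \<Sum>j\<in>I-{i}. T i j * (x i * (x i - x j))) + (\<Sum>i\<in>I. \<Sum>j\<in>I-{i}. T i j * (x j * (x j - x i)))"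
    using L L2 by simp
  also have "\<dots> = (\<Sum>i\<in>I. \<Sum>j\<in>I-{i}. T i j * (x i * (x i - x j)) + T i j * (x j * (x j - x i)))"
    by (simp add: sum.distrib)
  also have "\<dots> = (\<Sum>i\<in>I. \<Sum>j\<in>I-{i}. T i j * (x i - x j)^2)"
    by (intro sum.cong refl) (simp add: power2_eq_square algebra_simps)
  finally show ?thesis .
qed

lemma Bm_row:
  fixes x :: "nat \<Rightarrow> real"
  assumes i: "i \<in> {1..N}"
  shows "(\<Sum>j\<in>{1..N}. Bm N M d Y i j * x j) = (\<Sum>j\<in>{1..N}-{i}. (dp M d i j * Y i * Y j) * (x i - x j))"
proof -
  have a: "(\<Sum>j\<in>{1..N}. Bm N M d Y i j * x j) = Bm N M d Y i i * x i + (\<Sum>j\<in>{1..N}-{i}. Bm N M d Y i j * x j)"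
    using i by (simp add: sum.remove)
  have b: "(\<Sum>j\<in>{1..N}-{i}. Bm N M d Y i j * x j) = (\<Sum>j\<in>{1..N}-{i}. - (dp M d i j * Y i * Y j * x j))"
    by (intro sum.cong refl) (auto simp: Bm_def)
  have c: "Bm N M d Y i i * x i = (\<Sum>j\<in>{1..N}-{i}. dp M d i j * Y i * Y j * x i)"
    by (simp add: Bm_def sum_distrib_right)
  show ?thesis unfolding a b c
    by (simp add: right_diff_distrib sum_subtractf sum_negf)
qed

lemma Cm_row:
  fixes x :: "nat \<Rightarrow> real"
  shows "(\<Sum>j\<in>{1..N}. Cm N M d Y i j * x j) = (\<Sum>j\<in>{1..N}. Bm N M d Y i j * x j) + gam N M d * Y i * (\<Sum>j\<in>{1..N}. Y j * x j)"
proof -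
  have "\<And>j. Cm N M d Y i j * x j = Bm N M d Y i j * x j + gam N M d * Y i * (Y j * x j)"
    by (simp add: Cm_def algebra_simps)
  then show ?thesis by (simp only: sum.distrib sum_distrib_left)
qed

lemma Cm_row_vec:
  fixes V :: "nat \<Rightarrow> 'v::real_vector"
  shows "(\<Sum>j\<in>{1..N}. Cm N M d Y i j *\<^sub>R V j) = (\<Sum>j\<in>{1..N}. Bm N M d Y i j *\<^sub>R V j) + (gam N M d * Y i) *\<^sub>R (\<Sum>j\<in>{1..N}. Y j *\<^sub>R V j)"
  by (simp add: Cm_def scaleR_add_left sum.distrib scaleR_sum_right mult_ac)

lemma E2:
  fixes V :: "nat \<Rightarrow> 'v::real_vector"
  assumes i: "i \<in> {1..N}"
  shows "(\<Sum>j\<in>{1..N}. Bm N M d Y i j *\<^sub>R V j) = s2l {1..N} (dp M d) Y (\<lambda>j. Y j *\<^sub>R V j) i"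
proof -
  have a: "(\<Sum>j\<in>{1..N}. Bm N M d Y i j *\<^sub>R V j) = Bm N M d Y i i *\<^sub>R V i + (\<Sum>j\<in>{1..N}-{i}. Bm N M d Y i j *\<^sub>R V j)"
    using i by (simp add: sum.remove)
  have b: "(\<Sum>j\<in>{1..N}-{i}. Bm N M d Y i j *\<^sub>R V j) = (\<Sum>j\<in>{1..N}-{i}. - (Y i *\<^sub>R (dp M d i j *\<^sub>R (Y j *\<^sub>R V j))))"
    by (intro sum.cong refl) (auto simp: Bm_def mult_ac)
  have b2: "(\<Sum>j\<in>{1..N}-{i}. - (Y i *\<^sub>R (dp M d i j *\<^sub>R (Y j *\<^sub>R V j)))) = - (Y i *\<^sub>R (\<Sum>j\<in>{1..N}-{i}. dp M d i j *\<^sub>R (Y j *\<^sub>R V j)))"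
    by (simp add: scaleR_sum_right sum_negf)
  have c: "Bm N M d Y i i = (\<Sum>k\<in>{1..N}-{i}. dp M d i k * Y k) * Y i"
    by (simp add: Bm_def sum_distrib_right sum_distrib_left mult_ac)
  show ?thesis unfolding a b b2 s2l_def c by simp
qed

lemma posdef:
  assumes N1: "1 \<le> N"
    and Dsym: "\<forall>i\<in>{1..N}. \<forall>j\<in>{1..N}. dp M d i j = dp M d j i"
    and Dpos: "\<forall>i\<in>{1..N}. \<forall>j\<in>{1..N}. i \<noteq> j \<longrightarrow> 0 < dp M d i j"
    and g: "0 < gam N M d" and Ypos: "\<forall>i\<in>{1..N}. 0 < Y i"
  shows "sym_posdef N (Cm N M d Y)"
  unfolding sym_posdef_def
proof (intro conjI allI impI ballI)
  fix i j assume i: "i \<in> {1..N}" and j: "j \<in> {1..N}"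
  have e: "dp M d i j = dp M d j i" using Dsym i j by blast
  show "Cm N M d Y i j = Cm N M d Y j i"
    by (simp add: Cm_def Bm_def e mult_ac)
next
  fix x :: "nat \<Rightarrow> real"
  assume nz: "\<exists>i\<in>{1..N}. x i \<noteq> 0"
  define I where "I = {1..(N::nat)}"
  define T where "T i j = dp M d i j * Y i * Y j" for i j
  define S where "S = (\<Sum>j\<in>I. Y j * x j)"
  define Lq where "Lq = (\<Sum>i\<in>I. x i * (\<Sum>j\<in>I-{i}. T i j * (x i - x j)))"
  define R where "R = (\<Sum>i\<in>I. \<Sum>j\<in>I-{i}. T i j * (x i - x j)^2)"
  have fin: "finite I" by (simp add: I_def)
  have Tsym: "\<forall>i\<in>I. \<forall>j\<in>I. T i j = T j i" using Dsym by (auto simp: T_def I_def mult_ac)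
  have Tpos: "0 < T i j" if "i \<in> I" "j \<in> I" "i \<noteq> j" for i j
    using Dpos Ypos that by (simp add: T_def I_def)
  have R2: "2 * Lq = R" unfolding Lq_def R_def by (rule quad[OF fin Tsym])
  have inner_nn: "0 \<le> (\<Sum>j\<in>I-{i}. T i j * (x i - x j)^2)" if "i \<in> I" for i
    using Tpos that by (intro sum_nonneg mult_nonneg_nonneg) (auto intro: less_imp_le)
  have Rnn: "0 \<le> R" unfolding R_def by (rule sum_nonneg) (rule inner_nn)
  have qf: "(\<Sum>i\<in>I. \<Sum>j\<in>I. x i * Cm N M d Y i j * x j) = Lq + gam N M d * S^2"
  proof -
    have "(\<Sum>i\<in>I. \<Sum>j\<in>I. x i * Cm N M d Y i j * x j) = (\<Sum>i\<in>I. x i * (\<Sum>j\<in>I. Cm N M d Y i j * x j))"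
      by (simp add: sum_distrib_left mult_ac)
    also have "\<dots> = (\<Sum>i\<in>I. x i * (\<Sum>j\<in>I-{i}. T i j * (x i - x j)) + gam N M d * S * (Y i * x i))"
    proof (intro sum.cong refl)
      fix i assume i: "i \<in> I"
      have "(\<Sum>j\<in>I. Cm N M d Y i j * x j) = (\<Sum>j\<in>I-{i}. T i j * (x i - x j)) + gam N M d * Y i * S"
        unfolding I_def Cm_row Bm_row[OF i[unfolded I_def]] T_def S_def by simp
      then show "x i * (\<Sum>j\<in>I. Cm N M d Y i j * x j) = x i * (\<Sum>j\<in>I-{i}. T i j * (x i - x j)) + gam N M d * S * (Y i * x i)"
        by (simp add: algebra_simps)
    qed
    also have "\<dots> = Lq + gam N M d * S^2"
    proof -
      have h: "(\<Sum>i\<in>I. (gam N M d * S) * (Y i * x i)) = (gam N M d * S) * S"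
        unfolding S_def by (rule sum_distrib_left[symmetric])
      show ?thesis by (simp only: Lq_def sum.distrib h power2_eq_square)
    qed
    finally show ?thesis .
  qed
  show "0 < (\<Sum>i\<in>{1..N}. \<Sum>j\<in>{1..N}. x i * Cm N M d Y i j * x j)"
  proof (rule ccontr)
    assume "\<not> ?thesis"
    then have le: "Lq + gam N M d * S^2 \<le> 0" using qf by (simp add: I_def)
    have gS: "0 \<le> gam N M d * S^2" using g by simp
    have "R = 0" using le gS Rnn R2 by linarith
    then have allz2: "\<forall>i\<in>I. (\<Sum>j\<in>I-{i}. T i j * (x i - x j)^2) = 0"
      using sum_nonneg_eq_0_iff[OF fin, of "\<lambda>i. \<Sum>j\<in>I-{i}. T i j * (x i - x j)^2"] inner_nn
      unfolding R_def by blast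
    have eqx: "x j = x i" if "i \<in> I" "j \<in> I" for i j
    proof (cases "i = j")
      case False
      have nn: "\<forall>j\<in>I-{i}. 0 \<le> T i j * (x i - x j)^2"
      proof
        fix j assume "j \<in> I-{i}"
        then have "0 < T i j" using Tpos that(1) by auto
        then show "0 \<le> T i j * (x i - x j)^2" by simp
      qed
      have s0: "(\<Sum>j\<in>I-{i}. T i j * (x i - x j)^2) = 0" using allz2 that(1) by blast
      have "\<forall>j\<in>I-{i}. T i j * (x i - x j)^2 = 0"
        using sum_nonneg_eq_0_iff[of "I-{i}" "\<lambda>j. T i j * (x i - x j)^2"] fin nn s0 by simp
      then have "T i j * (x i - x j)^2 = 0" using that False by auto
      then show ?thesis using Tpos[OF that False] by simp
    qed simp
    have 1: "1 \<in> I" using N1 by (simp add: I_def)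
    have "S = x 1 * (\<Sum>j\<in>I. Y j)" unfolding S_def sum_distrib_left
      using eqx[OF 1] by (intro sum.cong refl) (simp add: mult_ac)
    moreover have "S = 0" using le gS Rnn R2 g by (smt (verit) mult_pos_pos zero_less_power2)
    moreover have "0 < (\<Sum>j\<in>I. Y j)" using Ypos fin 1 by (intro sum_pos) (auto simp: I_def)
    ultimately have "x 1 = 0" by simp
    then show False using nz eqx[OF 1] by (auto simp: I_def)
  qed
qed




theorem theorem3p1:
  fixes N :: nat and M :: "nat \<Rightarrow> real" and d :: "nat \<Rightarrow> nat \<Rightarrow> real"
    and Y :: "nat \<Rightarrow> real" and P :: "nat \<Rightarrow> real ^ 'n"
  assumes N2: "N \<ge> 2"
    and Mpos: "\<forall>i\<in>{1..N}. M i > 0"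
    and dsym: "\<forall>i\<in>{1..N}. \<forall>j\<in>{1..N}. i \<noteq> j \<longrightarrow> d i j = d j i"
    and dpos: "\<forall>i\<in>{1..N}. \<forall>j\<in>{1..N}. i \<noteq> j \<longrightarrow> d i j > 0"
    and Psum: "(\<Sum>i\<in>{1..N}. P i) = 0"
    and Ynn: "\<forall>i\<in>{1..N}. Y i \<ge> 0"
    and Ynz: "\<exists>i\<in>{1..N}. Y i \<noteq> 0"
  shows
   \<comment> \<open>(i)\<close>
   "((\<forall>i\<in>{1..N}. Y i > 0) \<longrightarrow>
       uniq_sol {1..N} (S1 N M d Y P)
     \<and> uniq_sol {1..N} (S2 N M d Y P)
     \<and> (\<forall>V. S1 N M d Y P V \<longrightarrow> S2 N M d Y P (\<lambda>i. Y i *\<^sub>R V i))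
     \<and> (\<forall>V. S1 N M d Y P V \<longrightarrow> Csys N M d Y P V)
     \<and> uniq_sol {1..N} (Csys N M d Y P)
     \<and> sym_posdef N (Cm N M d Y))
   \<comment> \<open>(ii)\<close>
   \<and> (\<forall>k. 1 \<le> k \<and> k < N \<longrightarrow> (\<forall>i\<in>{1..k}. Y i > 0) \<longrightarrow> (\<forall>i\<in>{k+1..N}. Y i = 0) \<longrightarrow>
         (\<forall>V V'. S1 N M d Y P V \<longrightarrow> S1 N M d Y P V' \<longrightarrow> (\<forall>i\<in>{1..k}. V i = V' i))
       \<and> (\<forall>V. S1 N M d Y P V \<longrightarrow> (\<forall>i\<in>{k+1..N}. \<forall>w. S1 N M d Y P (V(i := w))))
       \<and> uniq_sol {1..N} (S2 N M d Y P)
       \<and> (\<forall>F. S2 N M d Y P F \<longrightarrow>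
            (\<forall>i\<in>{k+1..N}. F i = (1 / (\<Sum>j\<in>{1..k}. dp M d i j * Y j)) *\<^sub>R P i))
       \<and> (\<forall>F. S2 N M d Y P F \<longrightarrow>
            Ksys N k M d Y P F F \<and> uniq_sol {1..k} (Ksys N k M d Y P F))
       \<and> ((\<forall>i\<in>{k+1..N}. P i = 0) \<longrightarrow>
            (\<forall>F. S2 N M d Y P F \<longrightarrow> (\<forall>i\<in>{k+1..N}. F i = 0))))
   \<comment> \<open>(iii)\<close>
   \<and> (\<forall>Q :: nat \<Rightarrow> real ^ 'n. uniq_sol {1..N} (S3 N M d Y Q))
   \<and> (\<forall>(Q :: nat \<Rightarrow> real ^ 'n) F. S3 N M d Y Q F \<longrightarrow>
        (gam N M d * (\<Sum>i\<in>{1..N}. Y i)) *\<^sub>R (\<Sum>j\<in>{1..N}. F j) = (\<Sum>j\<in>{1..N}. Q j))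
   \<and> (\<forall>F. S3 N M d Y P F \<longleftrightarrow> S2 N M d Y P F)"
proof -
  define I where "I = {1..N}"
  define D where "D = dp M d"
  define g where "g = gam N M d"
  have fin: "finite I" by (simp add: I_def)
  have Dsym: "\<forall>i\<in>I. \<forall>j\<in>I. D i j = D j i"
  proof (intro ballI)
    fix i j assume i: "i \<in> I" and j: "j \<in> I"
    show "D i j = D j i"
    proof (cases "i = j")
      case False
      then have "d i j = d j i" using dsym i j by (auto simp: I_def)
      then show ?thesis by (simp add: D_def dp_def mult.commute)
    qed simp
  qed
  have Dpos: "\<forall>i\<in>I. \<forall>j\<in>I. i \<noteq> j \<longrightarrow> 0 < D i j"
  proof (intro ballI impI)
    fix i j assume i: "i \<in> I" and j: "j \<in> I" and ij: "i \<noteq> j"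
    have "0 < d i j" using dpos i j ij by (auto simp: I_def)
    moreover have "0 < M i" "0 < M j" using Mpos i j by (auto simp: I_def)
    ultimately show "0 < D i j" by (simp add: D_def dp_def)
  qed
  have gpos: "0 < g"
  proof -
    let ?A = "{dp M d i j | i j. i \<in> {1..N} \<and> j \<in> {1..N} \<and> i \<noteq> j}"
    have "?A \<subseteq> (\<lambda>(i,j). dp M d i j) ` ({1..N} \<times> {1..N})" by auto
    then have finA: "finite ?A" by (rule finite_subset) simp
    have "dp M d 1 2 \<in> ?A" using N2 by force
    then have neA: "?A \<noteq> {}" by blast
    have "g \<in> ?A" unfolding g_def gam_def using finA neA by (rule Min_in)
    then show ?thesis using Dpos by (auto simp: D_def I_def)
  qed
  have Ynn': "\<forall>i\<in>I. 0 \<le> Y i" using Ynn by (simp add: I_def)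
  have Yex: "\<exists>i\<in>I. 0 < Y i" using Ynn Ynz by (force simp: I_def less_le)
  have SYpos: "0 < sum Y I" using Yex Ynn' fin by (metis sum_pos2)
  have S3eq: "S3 N M d Y Q F \<longleftrightarrow> (\<forall>i\<in>I. s3l I D g Y F i = Q i)" for Q F :: "nat \<Rightarrow> real^'n"
    by (simp add: S3_def s3l_def I_def D_def g_def)
  have S2eq: "S2 N M d Y Q F \<longleftrightarrow> sum F I = 0 \<and> (\<forall>i\<in>I. s2l I D Y F i = Q i)" for Q F :: "nat \<Rightarrow> real^'n"
    by (simp add: S2_def s2l_def I_def D_def)
  have S1eq: "S1 N M d Y Q V \<longleftrightarrow> (\<Sum>i\<in>I. Y i *\<^sub>R V i) = 0 \<and> (\<forall>i\<in>I. s2l I D Y (\<lambda>j. Y j *\<^sub>R V j) i = Q i)"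
    for Q V :: "nat \<Rightarrow> real^'n"
    unfolding S1_def I_def D_def using E2[of _ N M d Y V] by auto
  have sumid: "(g * (\<Sum>i\<in>I. Y i)) *\<^sub>R (\<Sum>j\<in>I. F j) = (\<Sum>j\<in>I. Q j)"
    if "S3 N M d Y Q F" for Q F :: "nat \<Rightarrow> real^'n"
  proof -
    have "(\<Sum>j\<in>I. Q j) = (\<Sum>i\<in>I. s3l I D g Y F i)" using that by (simp add: S3eq)
    then show ?thesis using E3sum[OF fin Dsym, of g Y F] by simp
  qed
  have uniqS3: "uniq_sol I (S3 N M d Y Q)" for Q :: "nat \<Rightarrow> real^'n"
    unfolding uniq_sol_def
  proof (intro conjI allI impI)
    show "\<exists>F. S3 N M d Y Q F"
      using exist_vec[OF Ynn'[unfolded I_def] Yex[unfolded I_def] Dsym[unfolded I_def] Dpos[unfolded I_def] gpos, of Q]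
      by (simp add: S3eq I_def)
    fix F G assume F: "S3 N M d Y Q F" and G: "S3 N M d Y Q G"
    have "\<forall>i\<in>I. s3l I D g Y (\<lambda>j. F j - G j) i = 0"
      using F G by (simp add: S3eq s3l_diff)
    then have "\<forall>i\<in>I. F i - G i = 0" by (rule kernel_vec[OF fin Ynn' Yex Dsym Dpos gpos])
    then show "\<forall>i\<in>I. F i = G i" by simp
  qed
  have S32: "S3 N M d Y P F \<longleftrightarrow> S2 N M d Y P F" for F
  proof
    assume F: "S3 N M d Y P F"
    have "(g * (\<Sum>i\<in>I. Y i)) *\<^sub>R (\<Sum>j\<in>I. F j) = 0" using sumid[OF F] Psum by (simp add: I_def)
    then have sF: "sum F I = 0" using gpos SYpos by simp
    show "S2 N M d Y P F" unfolding S2eq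
      using F sF E1[OF fin, of _ D g Y F] by (simp add: S3eq)
  next
    assume F: "S2 N M d Y P F"
    then have sF: "sum F I = 0" by (simp add: S2eq)
    show "S3 N M d Y P F" unfolding S3eq
      using F sF E1[OF fin, of _ D g Y F] by (simp add: S2eq)
  qed
  have uniqS2: "uniq_sol I (S2 N M d Y P)"
    using uniqS3[of P] by (simp add: uniq_sol_def S32)
  have S1agree: "V i = V' i" if V: "S1 N M d Y P V" and V': "S1 N M d Y P V'" and i: "i \<in> I" and Yi: "0 < Y i"
    for V V' i
  proof -
    define F where "F j = Y j *\<^sub>R (V j - V' j)" for j
    have sF: "sum F I = 0" using V V' by (simp add: S1eq F_def scaleR_diff_right sum_subtractf)
    have "\<forall>l\<in>I. s3l I D g Y F l = 0"
    proof
      fix l assume l: "l \<in> I"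
      have "(\<Sum>j\<in>{1..N}. Bm N M d Y l j *\<^sub>R (V j - V' j)) =
          (\<Sum>j\<in>{1..N}. Bm N M d Y l j *\<^sub>R V j) - (\<Sum>j\<in>{1..N}. Bm N M d Y l j *\<^sub>R V' j)"
        by (simp add: scaleR_diff_right sum_subtractf)
      also have "\<dots> = 0" using V V' l by (simp add: S1_def I_def)
      moreover have Feq: "F = (\<lambda>j. Y j *\<^sub>R (V j - V' j))" by (simp add: F_def fun_eq_iff)
      ultimately have "s2l I D Y F l = 0" using E2[of l N M d Y "\<lambda>j. V j - V' j"] l
        by (simp add: I_def D_def)
      then show "s3l I D g Y F l = 0" using E1[OF fin l, of D g Y F] sF by simp
    qed
    then have "\<forall>l\<in>I. F l = 0" by (rule kernel_vec[OF fin Ynn' Yex Dsym Dpos gpos])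
    then have "Y i *\<^sub>R (V i - V' i) = 0" using i by (simp add: F_def)
    then show ?thesis using Yi by simp
  qed
  show ?thesis
  proof (intro conjI)
    show "(\<forall>i\<in>{1..N}. Y i > 0) \<longrightarrow>
       uniq_sol {1..N} (S1 N M d Y P)
     \<and> uniq_sol {1..N} (S2 N M d Y P)
     \<and> (\<forall>V. S1 N M d Y P V \<longrightarrow> S2 N M d Y P (\<lambda>i. Y i *\<^sub>R V i))
     \<and> (\<forall>V. S1 N M d Y P V \<longrightarrow> Csys N M d Y P V)
     \<and> uniq_sol {1..N} (Csys N M d Y P)
     \<and> sym_posdef N (Cm N M d Y)"
    proof (intro impI)
      assume Yp: "\<forall>i\<in>{1..N}. Y i > 0"
      have Yp': "\<forall>i\<in>I. 0 < Y i" using Yp by (simp add: I_def)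
      have S1S2: "S2 N M d Y P (\<lambda>i. Y i *\<^sub>R V i)" if "S1 N M d Y P V" for V
        using that by (simp add: S1eq S2eq)
      have S1C: "Csys N M d Y P V" if V: "S1 N M d Y P V" for V
        unfolding Csys_def
      proof
        fix i assume i: "i \<in> {1..N}"
        show "(\<Sum>j\<in>{1..N}. Cm N M d Y i j *\<^sub>R V j) = P i"
          unfolding Cm_row_vec using V i by (simp add: S1_def)
      qed
      have exS1: "\<exists>V. S1 N M d Y P V"
      proof -
        obtain F where F: "S3 N M d Y P F" using uniqS3[of P] by (auto simp: uniq_sol_def)
        then have F2: "S2 N M d Y P F" using S32 by simp
        define V where "V j = (1 / Y j) *\<^sub>R F j" for j
        have YV: "\<forall>j\<in>I. Y j *\<^sub>R V j = F j"
        proof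
          fix j assume "j \<in> I"
          then have "Y j \<noteq> 0" using Yp' by force
          then show "Y j *\<^sub>R V j = F j" by (simp add: V_def)
        qed
        have "(\<Sum>i\<in>I. Y i *\<^sub>R V i) = sum F I" using YV by simp
        moreover have "\<forall>i\<in>I. s2l I D Y (\<lambda>j. Y j *\<^sub>R V j) i = s2l I D Y F i"
          using YV by (simp add: s2l_cong)
        ultimately have "S1 N M d Y P V" using F2 by (simp add: S1eq S2eq)
        then show ?thesis by blast
      qed
      have uS1: "uniq_sol {1..N} (S1 N M d Y P)"
        unfolding uniq_sol_def
      proof (intro conjI allI impI ballI)
        show "\<exists>V. S1 N M d Y P V" by (rule exS1)
        fix V V' i assume V: "S1 N M d Y P V" and V': "S1 N M d Y P V'" and i: "i \<in> {1..N}"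
        show "V i = V' i" by (rule S1agree[OF V V']) (use i Yp' in \<open>auto simp: I_def\<close>)
      qed
      have pd: "sym_posdef N (Cm N M d Y)"
        using posdef[of N M d Y] N2 Dsym Dpos gpos Yp by (simp add: I_def D_def g_def)
      have uC: "uniq_sol {1..N} (Csys N M d Y P)"
        unfolding uniq_sol_def
      proof (intro conjI allI impI)
        show "\<exists>V. Csys N M d Y P V" using exS1 S1C by blast
        fix V V' assume V: "Csys N M d Y P V" and V': "Csys N M d Y P V'"
        show "\<forall>i\<in>{1..N}. V i = V' i"
        proof
          fix i assume i: "i \<in> {1..N}"
          have "vec_nth (V i) c = vec_nth (V' i) c" for c
          proof -
            define w where "w j = vec_nth (V j) c - vec_nth (V' j) c" for j
            have row0: "(\<Sum>j\<in>{1..N}. Cm N M d Y l j * w j) = 0" if l: "l \<in> {1..N}" for l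
            proof -
              have "(\<Sum>j\<in>{1..N}. Cm N M d Y l j * w j) =
                 vec_nth (\<Sum>j\<in>{1..N}. Cm N M d Y l j *\<^sub>R V j) c - vec_nth (\<Sum>j\<in>{1..N}. Cm N M d Y l j *\<^sub>R V' j) c"
                by (simp add: w_def sum_component right_diff_distrib sum_subtractf)
              also have "\<dots> = 0" using V V' l by (simp add: Csys_def)
              finally show ?thesis .
            qed
            have "(\<Sum>i\<in>{1..N}. \<Sum>j\<in>{1..N}. w i * Cm N M d Y i j * w j) = (\<Sum>i\<in>{1..N}. w i * (\<Sum>j\<in>{1..N}. Cm N M d Y i j * w j))"
              by (simp add: sum_distrib_left mult_ac)
            also have "\<dots> = 0" using row0 by simp
            finally have "\<not> (\<exists>i\<in>{1..N}. w i \<noteq> 0)" using pd unfolding sym_posdef_def by force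
            then show ?thesis using i by (simp add: w_def)
          qed
          then show "V i = V' i" by (simp add: Finite_Cartesian_Product.vec_eq_iff)
        qed
      qed
      show "uniq_sol {1..N} (S1 N M d Y P)
     \<and> uniq_sol {1..N} (S2 N M d Y P)
     \<and> (\<forall>V. S1 N M d Y P V \<longrightarrow> S2 N M d Y P (\<lambda>i. Y i *\<^sub>R V i))
     \<and> (\<forall>V. S1 N M d Y P V \<longrightarrow> Csys N M d Y P V)
     \<and> uniq_sol {1..N} (Csys N M d Y P)
     \<and> sym_posdef N (Cm N M d Y)"
        using uS1 uniqS2 S1S2 S1C uC pd by (simp add: I_def)
    qed
  next
    show "\<forall>k. 1 \<le> k \<and> k < N \<longrightarrow> (\<forall>i\<in>{1..k}. Y i > 0) \<longrightarrow> (\<forall>i\<in>{k+1..N}. Y i = 0) \<longrightarrow>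
         (\<forall>V V'. S1 N M d Y P V \<longrightarrow> S1 N M d Y P V' \<longrightarrow> (\<forall>i\<in>{1..k}. V i = V' i))
       \<and> (\<forall>V. S1 N M d Y P V \<longrightarrow> (\<forall>i\<in>{k+1..N}. \<forall>w. S1 N M d Y P (V(i := w))))
       \<and> uniq_sol {1..N} (S2 N M d Y P)
       \<and> (\<forall>F. S2 N M d Y P F \<longrightarrow>
            (\<forall>i\<in>{k+1..N}. F i = (1 / (\<Sum>j\<in>{1..k}. dp M d i j * Y j)) *\<^sub>R P i))
       \<and> (\<forall>F. S2 N M d Y P F \<longrightarrow>
            Ksys N k M d Y P F F \<and> uniq_sol {1..k} (Ksys N k M d Y P F))
       \<and> ((\<forall>i\<in>{k+1..N}. P i = 0) \<longrightarrow>
            (\<forall>F. S2 N M d Y P F \<longrightarrow> (\<forall>i\<in>{k+1..N}. F i = 0)))"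
    proof (intro allI impI)
      fix k assume k: "1 \<le> k \<and> k < N" and Yk: "\<forall>i\<in>{1..k}. Y i > 0" and Y0: "\<forall>i\<in>{k+1..N}. Y i = 0"
      define K where "K = {1..k}"
      have KI: "K \<subseteq> I" using k by (auto simp: K_def I_def)
      have finK: "finite K" by (simp add: K_def)
      have IK: "I - K = {k+1..N}" using k by (auto simp: K_def I_def)
      have Yout: "Y j = 0" if "j \<in> I" "j \<notin> K" for j using Y0 that IK by blast
      have a1: "\<forall>V V'. S1 N M d Y P V \<longrightarrow> S1 N M d Y P V' \<longrightarrow> (\<forall>i\<in>{1..k}. V i = V' i)"
      proof (intro allI impI ballI)
        fix V V' i assume V: "S1 N M d Y P V" and V': "S1 N M d Y P V'" and i: "i \<in> {1..k}"
        show "V i = V' i" by (rule S1agree[OF V V']) (use i Yk KI in \<open>auto simp: K_def\<close>)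
      qed
      have a2: "\<forall>V. S1 N M d Y P V \<longrightarrow> (\<forall>i\<in>{k+1..N}. \<forall>w. S1 N M d Y P (V(i := w)))"
      proof (intro allI impI ballI)
        fix V w i assume V: "S1 N M d Y P V" and i: "i \<in> {k+1..N}"
        have Yi: "Y i = 0" using Y0 i by blast
        have s1: "(\<Sum>j\<in>{1..N}. Y j *\<^sub>R (V(i := w)) j) = (\<Sum>j\<in>{1..N}. Y j *\<^sub>R V j)"
          by (intro sum.cong refl) (simp add: Yi)
        have s2: "(\<Sum>j\<in>{1..N}. Bm N M d Y l j *\<^sub>R (V(i := w)) j) = (\<Sum>j\<in>{1..N}. Bm N M d Y l j *\<^sub>R V j)" for l
          by (intro sum.cong refl) (simp add: Yi Bm_def)
        show "S1 N M d Y P (V(i := w))" using V unfolding S1_def s1 s2 by simp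
      qed
      have sumK: "(\<Sum>j\<in>I-{i}. D i j * Y j) = (\<Sum>j\<in>K-{i}. D i j * Y j)" for i
        by (rule sum.mono_neutral_right) (use fin KI Yout in auto)
      have a4: "F i = (1 / (\<Sum>j\<in>{1..k}. dp M d i j * Y j)) *\<^sub>R P i"
        if F: "S2 N M d Y P F" and i: "i \<in> {k+1..N}" for F i
      proof -
        have iI: "i \<in> I" and iK: "i \<notin> K" using i k by (auto simp: I_def K_def)
        have Yi: "Y i = 0" using Y0 i by blast
        have "s2l I D Y F i = P i" using F iI by (simp add: S2eq)
        then have e: "(\<Sum>j\<in>K. D i j * Y j) *\<^sub>R F i = P i"
          using sumK[of i] iK by (simp add: s2l_def Yi)
        have "0 < (\<Sum>j\<in>K. D i j * Y j)"
        proof (rule sum_pos2[OF finK])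
          show 1: "1 \<in> K" using k by (simp add: K_def)
          have "1 \<in> I" using KI 1 by blast
          moreover have "i \<noteq> 1" using iK 1 by blast
          ultimately have "0 < D i 1" using Dpos iI by blast
          moreover have "0 < Y 1" using Yk k by simp
          ultimately show "0 < D i 1 * Y 1" by simp
          fix j assume j: "j \<in> K"
          then have "j \<in> I" "i \<noteq> j" using KI iK by auto
          then have "0 < D i j" using Dpos iI by blast
          moreover have "0 < Y j" using Yk j by (simp add: K_def)
          ultimately show "0 \<le> D i j * Y j" by simp
        qed
        moreover have c_eq: "(\<Sum>j\<in>K. D i j * Y j) = (\<Sum>j\<in>{1..k}. dp M d i j * Y j)" by (simp add: K_def D_def)
        ultimately have pc: "0 < (\<Sum>j\<in>{1..k}. dp M d i j * Y j)" by simp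
        have ec: "(\<Sum>j\<in>{1..k}. dp M d i j * Y j) *\<^sub>R F i = P i" using e c_eq by simp
        have "(1 / (\<Sum>j\<in>{1..k}. dp M d i j * Y j)) *\<^sub>R P i
            = (1 / (\<Sum>j\<in>{1..k}. dp M d i j * Y j)) *\<^sub>R ((\<Sum>j\<in>{1..k}. dp M d i j * Y j) *\<^sub>R F i)"
          using ec by simp
        also have "\<dots> = F i" using pc by simp
        finally show ?thesis by simp
      qed
      have KsysEq: "Ksys N k M d Y P F G \<longleftrightarrow> (\<forall>i\<in>K. s3l K D g Y G i = P i + Y i *\<^sub>R (\<Sum>j\<in>{k+1..N}. (D i j - g) *\<^sub>R F j))"
        for F G :: "nat \<Rightarrow> real^'n"
        by (simp add: Ksys_def s3l_def K_def D_def g_def)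
      have a5: "Ksys N k M d Y P F F \<and> uniq_sol {1..k} (Ksys N k M d Y P F)" if F: "S2 N M d Y P F" for F
      proof
        have F3: "\<forall>i\<in>I. s3l I D g Y F i = P i" using F S32 by (simp add: S3eq)
        show KF: "Ksys N k M d Y P F F" unfolding KsysEq
        proof
          fix i assume iK: "i \<in> K"
          have iI: "i \<in> I" using iK KI by blast
          have split: "I - {i} = (K - {i}) \<union> {k+1..N}" using IK KI iK by auto
          have disj: "(K - {i}) \<inter> {k+1..N} = {}" by (auto simp: K_def)
          have ss: "(\<Sum>j\<in>I-{i}. (D i j - g) *\<^sub>R F j) = (\<Sum>j\<in>K-{i}. (D i j - g) *\<^sub>R F j) + (\<Sum>j\<in>{k+1..N}. (D i j - g) *\<^sub>R F j)"
            unfolding split by (rule sum.union_disjoint) (use finK disj in auto)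
          have "s3l I D g Y F i = s3l K D g Y F i - Y i *\<^sub>R (\<Sum>j\<in>{k+1..N}. (D i j - g) *\<^sub>R F j)"
            unfolding s3l_def sumK ss by (simp add: algebra_simps)
          then show "s3l K D g Y F i = P i + Y i *\<^sub>R (\<Sum>j\<in>{k+1..N}. (D i j - g) *\<^sub>R F j)"
            using F3 iI by (simp add: algebra_simps)
        qed
        show "uniq_sol {1..k} (Ksys N k M d Y P F)"
          unfolding uniq_sol_def
        proof (intro conjI allI impI)
          show "\<exists>G. Ksys N k M d Y P F G" using KF by blast
          fix G G' assume G: "Ksys N k M d Y P F G" and G': "Ksys N k M d Y P F G'"
          have "\<forall>i\<in>K. s3l K D g Y (\<lambda>j. G j - G' j) i = 0"
            using G G' by (simp add: KsysEq s3l_diff)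
          moreover have "\<forall>i\<in>K. 0 \<le> Y i" using Yk by (auto simp: K_def intro: less_imp_le)
          moreover have "\<exists>i\<in>K. 0 < Y i" using Yk k by (auto simp: K_def)
          moreover have "\<forall>i\<in>K. \<forall>j\<in>K. D i j = D j i" using Dsym KI by blast
          moreover have "\<forall>i\<in>K. \<forall>j\<in>K. i \<noteq> j \<longrightarrow> 0 < D i j" using Dpos KI by blast
          ultimately have "\<forall>i\<in>K. G i - G' i = 0" using kernel_vec[OF finK _ _ _ _ gpos] by blast
          then show "\<forall>i\<in>{1..k}. G i = G' i" by (simp add: K_def)
        qed
      qed
      have a6: "(\<forall>i\<in>{k+1..N}. P i = 0) \<longrightarrow> (\<forall>F. S2 N M d Y P F \<longrightarrow> (\<forall>i\<in>{k+1..N}. F i = 0))"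
      proof (intro impI allI ballI)
        fix F i assume P0: "\<forall>i\<in>{k+1..N}. P i = 0" and F: "S2 N M d Y P F" and i: "i \<in> {k+1..N}"
        have "F i = (1 / (\<Sum>j\<in>{1..k}. dp M d i j * Y j)) *\<^sub>R P i" by (rule a4[OF F i])
        then show "F i = 0" using P0 i by simp
      qed
      show "(\<forall>V V'. S1 N M d Y P V \<longrightarrow> S1 N M d Y P V' \<longrightarrow> (\<forall>i\<in>{1..k}. V i = V' i))
       \<and> (\<forall>V. S1 N M d Y P V \<longrightarrow> (\<forall>i\<in>{k+1..N}. \<forall>w. S1 N M d Y P (V(i := w))))
       \<and> uniq_sol {1..N} (S2 N M d Y P)
       \<and> (\<forall>F. S2 N M d Y P F \<longrightarrow>
            (\<forall>i\<in>{k+1..N}. F i = (1 / (\<Sum>j\<in>{1..k}. dp M d i j * Y j)) *\<^sub>R P i))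
       \<and> (\<forall>F. S2 N M d Y P F \<longrightarrow>
            Ksys N k M d Y P F F \<and> uniq_sol {1..k} (Ksys N k M d Y P F))
       \<and> ((\<forall>i\<in>{k+1..N}. P i = 0) \<longrightarrow>
            (\<forall>F. S2 N M d Y P F \<longrightarrow> (\<forall>i\<in>{k+1..N}. F i = 0)))"
        using a1 a2 uniqS2 a4 a5 a6 by (simp add: I_def)
    qed
  next
    show "\<forall>Q :: nat \<Rightarrow> real ^ 'n. uniq_sol {1..N} (S3 N M d Y Q)"
      using uniqS3 by (simp add: I_def)
  next
    show "\<forall>(Q :: nat \<Rightarrow> real ^ 'n) F. S3 N M d Y Q F \<longrightarrow>
        (gam N M d * (\<Sum>i\<in>{1..N}. Y i)) *\<^sub>R (\<Sum>j\<in>{1..N}. F j) = (\<Sum>j\<in>{1..N}. Q j)"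
      using sumid by (simp add: I_def g_def)
  next
    show "\<forall>F. S3 N M d Y P F \<longleftrightarrow> S2 N M d Y P F" using S32 by simp
  qed
qed


end
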